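(* Let $E$ be a finite directed graph and let $A$ be either the path algebra $KE$ or the Leavitt path algebra $L_K(E)$, each with its standard filtration. Then $A$ belongs to exactly one of the following classes: Class 0 ($A$ is finite-dimensional); Class 1 ($A$ is infinite-dimensional with $\mathrm{GKdim}(A)<\infty$); Class 2 ($\mathrm{GKdim}(A)=\infty$ and $\mathrm{h}_{\mathrm{alg}}(A)<\infty$). In particular $\mathrm{h}_{\mathrm{alg}}(A)<\infty$.
   Context: A finite directed graph $E=(E^0,E^1,s,r)$ has finitely many vertices and edges, with source and range maps $s,r:E^1\to E^0$. Paths are finite sequences $e_1\cdots e_n$ of edges with $r(e_i)=s(e_{i+1})$; vertices are paths of length $0$. The path algebra $KE$ over a field $K$ has basis all paths with concatenation product (zero when not composable); its standard filtration $V_n$ is the span of paths of length $\le n$. The Leavitt path algebra $L_K(E)$ is the $K$-algebra generated by $E^0\cup E^1\cup\{e^*:e\in E^1\}$ subject to: $vw=\delta_{v,w}v$ for vertices; $s(e)e=e=er(e)$ and $r(e)e^*=e^*=e^*s(e)$; $e^*f=\delta_{e,f}r(e)$ for $e,f\in E^1$; $\sum_{s(e)=v}ee^*=v$ for every vertex $v$ with $0<|s^{-1}(v)|<\infty$. Its standard filtration $W_n$ is the span of elements $\lambda\mu^*$ with $\lambda,\mu$ paths and $l(\lambda)+l(\mu)\le n$. For a filtration $\{V_n\}$ of an algebra $A$, $\mathrm{h}_{\mathrm{alg}}(A)=0$ if $A$ is finite-dimensional and $\limsup_n\frac1n\log\dim(V_n/V_{n-1})$ otherwise. The Gelfand–Kirillov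 dimension is $\mathrm{GKdim}(A)=\limsup_{n\to\infty}\log\dim(V^n)/\log n$, where $V$ is any finite-dimensional generating subspace and $V^n$ is the span of products of at most $n$ elements of $V$. *)

theory Defs
  imports Complex_Main "HOL-Library.Function_Algebras" "HOL-Library.Extended_Real"
    "HOL-Library.Liminf_Limsup"
begin

definition scalef :: "'k::field \<Rightarrow> ('w \<Rightarrow> 'k) \<Rightarrow> ('w \<Rightarrow> 'k)" where
  "scalef c f = (\<lambda>x. c * f x)"

lemma vector_space_scalef: "vector_space (scalef :: 'k::field \<Rightarrow> ('w \<Rightarrow> 'k) \<Rightarrow> _)"
  by unfold_locales (auto simp: scalef_def fun_eq_iff algebra_simps)

abbreviation fspan :: "('w \<Rightarrow> 'k::field) set \<Rightarrow> ('w \<Rightarrow> 'k) set" where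
  "fspan \<equiv> module.span scalef"

abbreviation fdim :: "('w \<Rightarrow> 'k::field) set \<Rightarrow> nat" where
  "fdim \<equiv> vector_space.dim scalef"

definition bvec :: "'w \<Rightarrow> ('w \<Rightarrow> 'k::field)" where
  "bvec w = (\<lambda>x. if x = w then 1 else 0)"

text \<open>An algebra A is presented as a set of representatives ('carrier') inside a K-vector
  space of functions, a subspace ('ideal') by which it is quotiented (the zero space when no
  quotient is taken), a multiplication on representatives, and a filtration given by finite
  spanning sets: the n-th filtration subspace is the image of fspan (filt n) in A.\<close>

record 'a falg =
  carrier :: "'a set"
  ideal :: "'a set"
  mult :: "'a \<Rightarrow> 'a \<Rightarrow> 'a"
  filt :: "nat \<Rightarrow> 'a set"

definition fin_dim :: "('w \<Rightarrow> 'k::field) falg \<Rightarrow> bool" where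
  "fin_dim A \<longleftrightarrow> (\<exists>B. finite B \<and> B \<subseteq> carrier A \<and> carrier A \<subseteq> fspan (B \<union> ideal A))"

text \<open>Dimension of the image in A of the span of a finite set S:
  dim(span S / (span S \<inter> ideal)).\<close>
definition dimq :: "('w \<Rightarrow> 'k::field) falg \<Rightarrow> ('w \<Rightarrow> 'k) set \<Rightarrow> nat" where
  "dimq A S = fdim (fspan S) - fdim (fspan S \<inter> ideal A)"

definition filt_quot_dim :: "('w \<Rightarrow> 'k::field) falg \<Rightarrow> nat \<Rightarrow> nat" where
  "filt_quot_dim A n = dimq A (filt A n) - (case n of 0 \<Rightarrow> 0 | Suc m \<Rightarrow> dimq A (filt A m))"

definition halg :: "('w \<Rightarrow> 'k::field) falg \<Rightarrow> ereal" where
  "halg A = (if fin_dim A then 0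
     else limsup (\<lambda>n. ereal (ln (real (filt_quot_dim A n)) / real n)))"

fun prodlist :: "('a \<Rightarrow> 'a \<Rightarrow> 'a) \<Rightarrow> 'a list \<Rightarrow> 'a" where
  "prodlist m [] = undefined"
| "prodlist m (x # xs) = foldl m x xs"

definition prods :: "'a falg \<Rightarrow> 'a set \<Rightarrow> nat \<Rightarrow> 'a set" where
  "prods A G n = {prodlist (mult A) xs | xs. set xs \<subseteq> G \<and> 1 \<le> length xs \<and> length xs \<le> n}"

definition generating_set :: "('w \<Rightarrow> 'k::field) falg \<Rightarrow> ('w \<Rightarrow> 'k) set \<Rightarrow> bool" where
  "generating_set A G \<longleftrightarrow> finite G \<and> G \<subseteq> carrier A \<and>
     carrier A \<subseteq> fspan ((\<Union>n. prods A G n) \<union> ideal A)"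

definition gk_growth :: "('w \<Rightarrow> 'k::field) falg \<Rightarrow> ('w \<Rightarrow> 'k) set \<Rightarrow> ereal" where
  "gk_growth A G = limsup (\<lambda>n. ereal (ln (real (dimq A (prods A G n))) / ln (real n)))"

definition GKdim :: "('w \<Rightarrow> 'k::field) falg \<Rightarrow> ereal" where
  "GKdim A = gk_growth A (SOME G. generating_set A G)"

definition class0 :: "('w \<Rightarrow> 'k::field) falg \<Rightarrow> bool" where
  "class0 A \<longleftrightarrow> fin_dim A"
definition class1 :: "('w \<Rightarrow> 'k::field) falg \<Rightarrow> bool" where
  "class1 A \<longleftrightarrow> \<not> fin_dim A \<and> GKdim A < \<infinity>"
definition class2 :: "('w \<Rightarrow> 'k::field) falg \<Rightarrow> bool" where
  "class2 A \<longleftrightarrow> GKdim A = \<infinity> \<and> halg A < \<infinity>"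

definition exactly_one3 :: "bool \<Rightarrow> bool \<Rightarrow> bool \<Rightarrow> bool" where
  "exactly_one3 P Q R \<longleftrightarrow> (P \<and> \<not> Q \<and> \<not> R) \<or> (\<not> P \<and> Q \<and> \<not> R) \<or> (\<not> P \<and> \<not> Q \<and> R)"

text \<open>A path is a pair (v, es): its source vertex v and its edge list es; length 0 paths are
  vertices (v, []).\<close>
definition is_path :: "'v set \<Rightarrow> 'e set \<Rightarrow> ('e \<Rightarrow> 'v) \<Rightarrow> ('e \<Rightarrow> 'v) \<Rightarrow> 'v \<times> 'e list \<Rightarrow> bool" where
  "is_path E0 E1 s r p \<longleftrightarrow> fst p \<in> E0 \<and> set (snd p) \<subseteq> E1 \<and>
     (snd p \<noteq> [] \<longrightarrow> s (hd (snd p)) = fst p) \<and>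
     (\<forall>i. Suc i < length (snd p) \<longrightarrow> r (snd p ! i) = s (snd p ! Suc i))"

definition path_end :: "('e \<Rightarrow> 'v) \<Rightarrow> 'v \<times> 'e list \<Rightarrow> 'v" where
  "path_end r p = (if snd p = [] then fst p else r (last (snd p)))"

definition path_len :: "'v \<times> 'e list \<Rightarrow> nat" where
  "path_len p = length (snd p)"

definition supp :: "('w \<Rightarrow> 'k::zero) \<Rightarrow> 'w set" where
  "supp f = {x. f x \<noteq> 0}"

text \<open>Concatenation p q of paths (None = the product is zero).\<close>
definition path_concat :: "('e \<Rightarrow> 'v) \<Rightarrow> 'v \<times> 'e list \<Rightarrow> 'v \<times> 'e list \<Rightarrow> ('v \<times> 'e list) option" where
  "path_concat r p q = (if path_end r p = fst q then Some (fst p, snd p @ snd q) else None)"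

definition pa_mult :: "('e \<Rightarrow> 'v) \<Rightarrow> ('v \<times> 'e list \<Rightarrow> 'k::field) \<Rightarrow> ('v \<times> 'e list \<Rightarrow> 'k) \<Rightarrow> ('v \<times> 'e list \<Rightarrow> 'k)" where
  "pa_mult r f g = (\<lambda>q. \<Sum>p1\<in>supp f. \<Sum>p2\<in>supp g.
      if path_concat r p1 p2 = Some q then f p1 * g p2 else 0)"

definition path_algebra :: "'v set \<Rightarrow> 'e set \<Rightarrow> ('e \<Rightarrow> 'v) \<Rightarrow> ('e \<Rightarrow> 'v) \<Rightarrow> ('v \<times> 'e list \<Rightarrow> 'k::field) falg" where
  "path_algebra E0 E1 s r =
     \<lparr> carrier = {f. finite (supp f) \<and> supp f \<subseteq> {p. is_path E0 E1 s r p}},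
       ideal = {0},
       mult = pa_mult r,
       filt = (\<lambda>n. {bvec p | p. is_path E0 E1 s r p \<and> path_len p \<le> n}) \<rparr>"

datatype ('v, 'e) gen = GV 'v | GE 'e | GG 'e  \<comment> \<open>vertex v, edge e, ghost edge e*\<close>

definition gens :: "'v set \<Rightarrow> 'e set \<Rightarrow> ('v, 'e) gen set" where
  "gens E0 E1 = GV ` E0 \<union> GE ` E1 \<union> GG ` E1"

text \<open>Product in the free algebra: elements are functions on words (lists of generators),
  supported on nonempty words.\<close>
definition free_mult :: "('g list \<Rightarrow> 'k::field) \<Rightarrow> ('g list \<Rightarrow> 'k) \<Rightarrow> ('g list \<Rightarrow> 'k)" where
  "free_mult f g = (\<lambda>w. \<Sum>i\<in>{1..<length w}. f (take i w) * g (drop i w))"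

definition lpa_relations :: "'v set \<Rightarrow> 'e set \<Rightarrow> ('e \<Rightarrow> 'v) \<Rightarrow> ('e \<Rightarrow> 'v) \<Rightarrow>
    (('v, 'e) gen list \<Rightarrow> 'k::field) set" where
  "lpa_relations E0 E1 s r =
     {bvec [GV v, GV w] - (if v = w then bvec [GV v] else 0) | v w. v \<in> E0 \<and> w \<in> E0}
   \<union> {bvec [GV (s e), GE e] - bvec [GE e] | e. e \<in> E1}
   \<union> {bvec [GE e, GV (r e)] - bvec [GE e] | e. e \<in> E1}
   \<union> {bvec [GV (r e), GG e] - bvec [GG e] | e. e \<in> E1}
   \<union> {bvec [GG e, GV (s e)] - bvec [GG e] | e. e \<in> E1}
   \<union> {bvec [GG e, GE f] - (if e = f then bvec [GV (r e)] else 0) | e f. e \<in> E1 \<and> f \<in> E1}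
   \<union> {(\<Sum>e\<in>{e\<in>E1. s e = v}. bvec [GE e, GG e]) - bvec [GV v] | v.
        v \<in> E0 \<and> {e\<in>E1. s e = v} \<noteq> {} \<and> finite {e\<in>E1. s e = v}}"

definition free_ideal :: "'g set \<Rightarrow> ('g list \<Rightarrow> 'k::field) set \<Rightarrow> ('g list \<Rightarrow> 'k) set" where
  "free_ideal Gs R = fspan (R
     \<union> {free_mult (bvec u) x | u x. x \<in> R \<and> u \<noteq> [] \<and> set u \<subseteq> Gs}
     \<union> {free_mult x (bvec w) | w x. x \<in> R \<and> w \<noteq> [] \<and> set w \<subseteq> Gs}
     \<union> {free_mult (free_mult (bvec u) x) (bvec w) | u w x.
          x \<in> R \<and> u \<noteq> [] \<and> set u \<subseteq> Gs \<and> w \<noteq> [] \<and> set w \<subseteq> Gs})"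

text \<open>A path as an element of L_K(E), and mu* for a path mu (ghost path, reversed).\<close>
definition lpa_path :: "'v \<times> 'e list \<Rightarrow> (('v, 'e) gen list \<Rightarrow> 'k::field)" where
  "lpa_path p = (if snd p = [] then bvec [GV (fst p)] else bvec (map GE (snd p)))"

definition lpa_ghost :: "'v \<times> 'e list \<Rightarrow> (('v, 'e) gen list \<Rightarrow> 'k::field)" where
  "lpa_ghost p = (if snd p = [] then bvec [GV (fst p)] else bvec (rev (map GG (snd p))))"

definition leavitt_path_algebra :: "'v set \<Rightarrow> 'e set \<Rightarrow> ('e \<Rightarrow> 'v) \<Rightarrow> ('e \<Rightarrow> 'v) \<Rightarrow>
    (('v, 'e) gen list \<Rightarrow> 'k::field) falg" where
  "leavitt_path_algebra E0 E1 s r =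
     \<lparr> carrier = {f. finite (supp f) \<and> f [] = 0 \<and> (\<forall>w\<in>supp f. set w \<subseteq> gens E0 E1)},
       ideal = free_ideal (gens E0 E1) (lpa_relations E0 E1 s r),
       mult = free_mult,
       filt = (\<lambda>n. {free_mult (lpa_path lam) (lpa_ghost mu) | lam mu.
                  is_path E0 E1 s r lam \<and> is_path E0 E1 s r mu \<and> path_len lam + path_len mu \<le> n}) \<rparr>"

end

theory Submission
  imports Defs
begin


context vector_space begin

lemma span_fin_sub:
  assumes "x \<in> span X" shows "\<exists>t. finite t \<and> t \<subseteq> X \<and> x \<in> span t"
proof -
  from assms obtain t r where "finite t" "t \<subseteq> X" "x = (\<Sum>a\<in>t. r a *s a)"
    unfolding span_explicit by blast
  moreover have "(\<Sum>a\<in>t. r a *s a) \<in> span t"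
    by (intro span_sum span_scale span_base)
  ultimately show ?thesis by blast
qed

lemma span_fin_sub_set:
  assumes "finite S" "S \<subseteq> span X" shows "\<exists>t. finite t \<and> t \<subseteq> X \<and> S \<subseteq> span t"
  using assms
proof (induction S rule: finite_induct)
  case empty
  have "finite {}" "{} \<subseteq> X" "{} \<subseteq> span {}" by simp_all
  then show ?case by blast
next
  case (insert x S)
  then have "S \<subseteq> span X" "x \<in> span X" by simp_all
  then obtain t where t: "finite t" "t \<subseteq> X" "S \<subseteq> span t" using insert.IH by blast
  obtain t' where t': "finite t'" "t' \<subseteq> X" "x \<in> span t'"
    using span_fin_sub[OF \<open>x \<in> span X\<close>] by blast
  have "span t \<subseteq> span (t \<union> t')" "span t' \<subseteq> span (t \<union> t')" by (simp_all add: span_mono)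
  then have "insert x S \<subseteq> span (t \<union> t')" using t t' by blast
  moreover have "finite (t \<union> t')" "t \<union> t' \<subseteq> X" using t t' by simp_all
  ultimately show ?case by blast
qed

lemma indep_union_ext:
  assumes C: "independent C" and D: "independent D" and b1D: "b1 \<subseteq> D"
    and int: "span C \<inter> span D \<subseteq> span b1"
    and fin: "finite D'" and D'D: "D' \<subseteq> D - b1"
  shows "independent (C \<union> D')"
  using fin D'D
proof (induction D' rule: finite_induct)
  case empty then show ?case using C by simp
next
  case (insert d D')
  have ind: "independent (C \<union> D')" using insert by auto
  have dD: "d \<in> D" "d \<notin> b1" using insert by auto
  have "d \<notin> span (C \<union> D')"
  proof
    assume "d \<in> span (C \<union> D')"
    then obtain t w where tw: "d = t + w" "t \<in> span C" "w \<in> span D'"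
      unfolding span_Un by blast
    have "span D' \<subseteq> span D" using insert by (intro span_mono) auto
    have tdw: "t = d - w" using tw by (simp add: algebra_simps)
    have "w \<in> span D" using tw \<open>span D' \<subseteq> span D\<close> by auto
    then have "t \<in> span D" unfolding tdw using dD span_diff span_base by blast
    then have "t \<in> span b1" using int tw by auto
    then have "d \<in> span (b1 \<union> D')" unfolding span_Un using tw by blast
    moreover have "b1 \<union> D' \<subseteq> D - {d}" using b1D insert dD by auto
    ultimately have "d \<in> span (D - {d})" using span_mono by blast
    then show False using D dD dependent_def by blast
  qed
  then show ?case using independent_insertI[OF _ ind] by simp
qed

lemma dim_quot_bound:
  assumes S: "finite S" and B: "finite B" and I: "subspace I"
    and SB: "S \<subseteq> span (B \<union> I)"
  shows "dim (span S) \<le> dim (span S \<inter> I) + card B"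
proof -
  obtain J where J: "finite J" "J \<subseteq> B \<union> I" "S \<subseteq> span J"
    using span_fin_sub_set[OF S SB] by blast
  define J' where "J' = J \<inter> I"
  have JJ': "J \<subseteq> B \<union> J'" using J J'_def by auto
  have J'fin: "finite J'" "J' \<subseteq> I" using J J'_def by auto
  let ?T = "span S"
  obtain b1 where b1: "b1 \<subseteq> ?T \<inter> I" "independent b1" "?T \<inter> I \<subseteq> span b1" "card b1 = dim (?T \<inter> I)"
    using basis_exists by blast
  have b1fin: "finite b1" using independent_span_bound[OF S b1(2)] b1(1) by auto
  obtain C where C: "b1 \<subseteq> C" "C \<subseteq> ?T" "independent C" "?T \<subseteq> span C"
    using maximal_independent_subset_extend[of b1 ?T] b1 by blast
  have Cfin: "finite C" and cardC: "card C = dim ?T"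
    using independent_span_bound[OF S C(3)] C basis_card_eq_dim[of C ?T] by auto
  have b1I: "b1 \<subseteq> span (b1 \<union> J')" using span_superset by blast
  obtain D where D: "b1 \<subseteq> D" "D \<subseteq> span (b1 \<union> J')" "independent D" "span (b1 \<union> J') \<subseteq> span D"
    using maximal_independent_subset_extend[of b1 "span (b1 \<union> J')"] b1(2) b1I by blast
  have Dfin: "finite D" using independent_span_bound[of "b1 \<union> J'" D] D b1fin J'fin by auto
  have spanI: "span (b1 \<union> J') \<subseteq> I" using b1 J'fin I by (intro span_minimal) auto
  have spC: "span C \<subseteq> ?T" using C by (intro span_minimal) auto
  have spD: "span D \<subseteq> I" using D spanI span_minimal[of D I] I by auto
  have int: "span C \<inter> span D \<subseteq> span b1" using spC spD b1 by auto
  have indCD: "independent (C \<union> (D - b1))"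
    using indep_union_ext[OF C(3) D(3) D(1) int _ order.refl] Dfin by auto
  have CDsub: "C \<union> (D - b1) \<subseteq> span (B \<union> D)"
  proof -
    have "C \<subseteq> span J" using C J span_minimal[of S "span J"] by auto
    also have "span J \<subseteq> span (B \<union> J')" using JJ' span_mono by blast
    also have "span (B \<union> J') \<subseteq> span (B \<union> D)"
    proof (rule span_minimal)
      show "B \<union> J' \<subseteq> span (B \<union> D)"
      proof -
        have "J' \<subseteq> span (b1 \<union> J')" using span_superset by blast
        also have "\<dots> \<subseteq> span D" by (rule D(4))
        also have "\<dots> \<subseteq> span (B \<union> D)" by (rule span_mono) auto
        finally show ?thesis using span_superset[of "B \<union> D"] by auto
      qed
    qed auto
    finally have "C \<subseteq> span (B \<union> D)" .
    moreover have "D - b1 \<subseteq> span (B \<union> D)" using span_superset by blast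
    ultimately show ?thesis by auto
  qed
  have "card (C \<union> (D - b1)) \<le> card (B \<union> D)"
    using independent_span_bound[OF _ indCD CDsub] B Dfin by auto
  also have "\<dots> \<le> card B + card D" by (rule card_Un_le)
  finally have le1: "card (C \<union> (D - b1)) \<le> card B + card D" .
  have "C \<inter> (D - b1) = {}"
  proof (rule ccontr)
    assume "C \<inter> (D - b1) \<noteq> {}"
    then obtain x where x: "x \<in> C" "x \<in> D" "x \<notin> b1" by auto
    have "x \<in> span C" "x \<in> span D" using x span_base by auto
    then have "x \<in> span b1" using int by auto
    moreover have "b1 \<subseteq> C - {x}" using C x by auto
    ultimately have "x \<in> span (C - {x})" using span_mono by blast
    then show False using C(3) x dependent_def by blast
  qed
  then have "card (C \<union> (D - b1)) = card C + card (D - b1)"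
    using Cfin Dfin by (simp add: card_Un_disjoint)
  moreover have "card (D - b1) = card D - card b1" using D(1) b1fin by (simp add: card_Diff_subset)
  moreover have "card b1 \<le> card D" using D(1) Dfin card_mono by blast
  ultimately show ?thesis using le1 cardC b1(4) by linarith
qed

end



lemma dimq_le_card: fixes A :: "('w \<Rightarrow> 'k::field) falg" shows "finite S \<Longrightarrow> dimq A S \<le> card S"
proof -
  interpret V: vector_space "scalef :: 'k \<Rightarrow> ('w \<Rightarrow> 'k) \<Rightarrow> _" by (rule vector_space_scalef)
  assume "finite S"
  then show ?thesis unfolding dimq_def using V.dim_le_card[of "V.span S" S] by simp
qed

lemma halg_bound:
  fixes A :: "('w \<Rightarrow> 'k::field) falg" and D :: nat
  assumes fin: "\<And>n. finite (filt A n)" and cd: "\<And>n. card (filt A n) \<le> D ^ Suc n" and D: "D \<ge> 1"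
  shows "halg A < \<infinity>"
proof (cases "fin_dim A")
  case True then show ?thesis unfolding halg_def by simp
next
  case False
  have bnd: "ln (real (filt_quot_dim A n)) / real n \<le> 2 * ln (real D)" for n
  proof -
    have lnD: "ln (real D) \<ge> 0" using D by simp
    show ?thesis
    proof (cases "n = 0 \<or> filt_quot_dim A n = 0")
      case True then show ?thesis using lnD by auto
    next
      case F: False
      have "filt_quot_dim A n \<le> dimq A (filt A n)" unfolding filt_quot_dim_def by simp
      also have "\<dots> \<le> card (filt A n)" by (rule dimq_le_card[OF fin])
      also have "\<dots> \<le> D ^ Suc n" by (rule cd)
      finally have le: "real (filt_quot_dim A n) \<le> real D ^ Suc n" by (metis of_nat_le_iff of_nat_power)
      have "ln (real (filt_quot_dim A n)) \<le> ln (real D ^ Suc n)"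
        using le F D by (subst ln_le_cancel_iff) auto
      also have "\<dots> = real (Suc n) * ln (real D)" using D by (subst ln_realpow) auto
      also have "\<dots> \<le> real (2 * n) * ln (real D)" using F lnD by (intro mult_right_mono) auto
      finally have "ln (real (filt_quot_dim A n)) \<le> real n * (2 * ln (real D))" by simp
      then show ?thesis using F by (simp add: divide_le_eq mult.commute)
    qed
  qed
  have "limsup (\<lambda>n. ereal (ln (real (filt_quot_dim A n)) / real n)) \<le> ereal (2 * ln (real D))"
    by (intro Limsup_bounded always_eventually) (use bnd in auto)
  then show ?thesis unfolding halg_def using False by (auto simp: order_le_less_trans)
qed

lemma foldl_closed:
  assumes "\<And>x y. x \<in> C \<Longrightarrow> y \<in> C \<Longrightarrow> m x y \<in> C"
  shows "x \<in> C \<Longrightarrow> set xs \<subseteq> C \<Longrightarrow> foldl m x xs \<in> C"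
  by (induction xs arbitrary: x) (auto simp: assms)

lemma prods_closed:
  assumes "\<And>x y. x \<in> carrier A \<Longrightarrow> y \<in> carrier A \<Longrightarrow> mult A x y \<in> carrier A"
    and "G \<subseteq> carrier A"
  shows "prods A G n \<subseteq> carrier A"
proof
  fix z assume "z \<in> prods A G n"
  then obtain xs where xs: "z = prodlist (mult A) xs" "set xs \<subseteq> G" "1 \<le> length xs"
    unfolding prods_def by blast
  then obtain y ys where "xs = y # ys" by (cases xs) auto
  then show "z \<in> carrier A" using xs assms foldl_closed[of "carrier A" "mult A" y ys] by auto
qed

lemma prods_finite: "finite G \<Longrightarrow> finite (prods A G n)"
proof -
  assume "finite G"
  have "prods A G n \<subseteq> prodlist (mult A) ` {xs. set xs \<subseteq> G \<and> length xs \<le> n}"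
    unfolding prods_def by auto
  then show ?thesis using finite_lists_length_le[OF \<open>finite G\<close>] finite_subset by blast
qed

lemma prods_one: "G \<subseteq> prods A G 1"
proof
  fix x assume "x \<in> G"
  then show "x \<in> prods A G 1" unfolding prods_def
    by (intro CollectI exI[of _ "[x]"]) auto
qed

lemma gk_fin:
  fixes A :: "('w \<Rightarrow> 'k::field) falg"
  assumes fd: "fin_dim A"
    and cl: "\<And>x y. x \<in> carrier A \<Longrightarrow> y \<in> carrier A \<Longrightarrow> mult A x y \<in> carrier A"
    and sub: "module.subspace scalef (ideal A)"
  shows "GKdim A < \<infinity>"
proof -
  interpret V: vector_space "scalef :: 'k \<Rightarrow> ('w \<Rightarrow> 'k) \<Rightarrow> _" by (rule vector_space_scalef)
  obtain B where B: "finite B" "B \<subseteq> carrier A" "carrier A \<subseteq> fspan (B \<union> ideal A)"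
    using fd unfolding fin_dim_def by blast
  have "generating_set A B"
    unfolding generating_set_def using B prods_one[of B A]
    V.span_mono[of "B \<union> ideal A" "(\<Union>n. prods A B n) \<union> ideal A"] by blast
  then have gs: "generating_set A (SOME G. generating_set A G)" by (rule someI)
  define G where "G = (SOME G. generating_set A G)"
  have G: "finite G" "G \<subseteq> carrier A" using gs unfolding G_def generating_set_def by auto
  have dq: "dimq A (prods A G n) \<le> card B" for n
  proof -
    have "prods A G n \<subseteq> fspan (B \<union> ideal A)" using prods_closed[OF cl G(2)] B by blast
    from V.dim_quot_bound[OF prods_finite[OF G(1)] B(1) sub this]
    show ?thesis unfolding dimq_def by simp
  qed
  have bnd: "ln (real (dimq A (prods A G n))) / ln (real n) \<le> ln (real (card B) + 1) / ln 2" for n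
  proof -
    have r0: "0 \<le> ln (real (card B) + 1) / ln 2" by simp
    show ?thesis
    proof (cases "n < 2")
      case True
      then have "n = 0 \<or> n = 1" by auto
      then show ?thesis using r0 by auto
    next
      case False
      have ln2: "ln 2 \<le> ln (real n)" using False by simp
      have "ln (real (dimq A (prods A G n))) \<le> ln (real (card B) + 1)"
      proof (cases "dimq A (prods A G n) = 0")
        case True then show ?thesis by simp
      next
        case False then show ?thesis using dq[of n] by (subst ln_le_cancel_iff) auto
      qed
      moreover have "ln (real (dimq A (prods A G n))) \<ge> 0"
        by (cases "dimq A (prods A G n) = 0") auto
      ultimately show ?thesis using ln2
        by (meson frac_le ln_ge_zero ln_gt_zero one_le_numeral order.trans one_less_numeral_iff semiring_norm(76)
            of_nat_0_le_iff add_nonneg_nonneg zero_le_one)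
    qed
  qed
  have "GKdim A \<le> ereal (ln (real (card B) + 1) / ln 2)"
    unfolding GKdim_def gk_growth_def G_def[symmetric]
    by (intro Limsup_bounded always_eventually) (use bnd in auto)
  then show ?thesis by (auto simp: order_le_less_trans)
qed



lemma is_path_concat:
  assumes p: "is_path E0 E1 s r p" and q: "is_path E0 E1 s r q" and e: "path_end r p = fst q"
  shows "is_path E0 E1 s r (fst p, snd p @ snd q)"
proof -
  obtain v a where pv: "p = (v, a)" by (cases p)
  obtain w b where qw: "q = (w, b)" by (cases q)
  have P: "v \<in> E0" "set a \<subseteq> E1" "a \<noteq> [] \<Longrightarrow> s (hd a) = v"
     "\<And>i. Suc i < length a \<Longrightarrow> r (a ! i) = s (a ! Suc i)"
    using p unfolding pv is_path_def by auto
  have Q: "w \<in> E0" "set b \<subseteq> E1" "b \<noteq> [] \<Longrightarrow> s (hd b) = w"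
     "\<And>i. Suc i < length b \<Longrightarrow> r (b ! i) = s (b ! Suc i)"
    using q unfolding qw is_path_def by auto
  have E: "(if a = [] then v else r (last a)) = w" using e by (auto simp: pv qw path_end_def split: if_splits)
  have adj: "r ((a @ b) ! i) = s ((a @ b) ! Suc i)" if i: "Suc i < length (a @ b)" for i
  proof -
    consider "Suc i < length a" | "Suc i = length a" | "length a \<le> i" by linarith
    then show ?thesis
    proof cases
      case 1 then show ?thesis using P(4)[of i] by (simp add: nth_append)
    next
      case 2
      then have an: "a \<noteq> []" and bn: "b \<noteq> []" using i by auto
      have ii: "i = length a - 1" using 2 by simp
      have "(a @ b) ! i = last a" using 2 an unfolding ii by (simp add: nth_append last_conv_nth)
      moreover have "(a @ b) ! Suc i = hd b" using 2 bn by (simp add: nth_append hd_conv_nth)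
      ultimately show ?thesis using E an Q(3)[OF bn] by simp
    next
      case 3
      then have "Suc (i - length a) < length b" using i by auto
      then show ?thesis using Q(4)[of "i - length a"] 3 by (simp add: nth_append Suc_diff_le)
    qed
  qed
  have hd: "s (hd (a @ b)) = v" if "a @ b \<noteq> []"
  proof (cases "a = []")
    case True then show ?thesis using that E Q(3) by simp
  next
    case False then show ?thesis using P(3) by simp
  qed
  show ?thesis unfolding pv qw is_path_def using P Q adj hd by auto
qed

lemma pa_closed:
  fixes f g :: "'v \<times> 'e list \<Rightarrow> 'k::field"
  assumes "f \<in> carrier (path_algebra E0 E1 s r)" "g \<in> carrier (path_algebra E0 E1 s r)"
  shows "mult (path_algebra E0 E1 s r) f g \<in> carrier (path_algebra E0 E1 s r)"
proof -
  have f: "finite (supp f)" "supp f \<subseteq> {p. is_path E0 E1 s r p}"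
   and g: "finite (supp g)" "supp g \<subseteq> {p. is_path E0 E1 s r p}"
    using assms unfolding path_algebra_def by auto
  have sub: "supp (pa_mult r f g) \<subseteq> (\<lambda>(p1, p2). (fst p1, snd p1 @ snd p2)) `
      {(p1, p2). p1 \<in> supp f \<and> p2 \<in> supp g \<and> path_end r p1 = fst p2}"
  proof
    fix q assume q: "q \<in> supp (pa_mult r f g)"
    have "\<exists>p1\<in>supp f. \<exists>p2\<in>supp g. path_concat r p1 p2 = Some q"
    proof (rule ccontr)
      assume "\<not> ?thesis"
      then have "pa_mult r f g q = 0" unfolding pa_mult_def
        by (intro sum.neutral ballI) auto
      then show False using q unfolding supp_def by simp
    qed
    then obtain p1 p2 where "p1 \<in> supp f" "p2 \<in> supp g" "path_concat r p1 p2 = Some q" by blast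
    then show "q \<in> (\<lambda>(p1, p2). (fst p1, snd p1 @ snd p2)) `
      {(p1, p2). p1 \<in> supp f \<and> p2 \<in> supp g \<and> path_end r p1 = fst p2}"
      unfolding path_concat_def by (auto split: if_splits intro!: image_eqI[of _ _ "(p1, p2)"])
  qed
  have fin: "finite {(p1, p2). p1 \<in> supp f \<and> p2 \<in> supp g \<and> path_end r p1 = fst p2}"
    by (rule finite_subset[of _ "supp f \<times> supp g"]) (use f g in auto)
  have "supp (pa_mult r f g) \<subseteq> {p. is_path E0 E1 s r p}"
    using sub f g is_path_concat by fastforce
  then show ?thesis using sub fin finite_subset unfolding path_algebra_def
    by (auto intro: finite_subset[OF sub])
qed

lemma lpa_closed:
  fixes f g :: "('v, 'e) gen list \<Rightarrow> 'k::field"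
  assumes "f \<in> carrier (leavitt_path_algebra E0 E1 s r)" "g \<in> carrier (leavitt_path_algebra E0 E1 s r)"
  shows "mult (leavitt_path_algebra E0 E1 s r) f g \<in> carrier (leavitt_path_algebra E0 E1 s r)"
proof -
  have f: "finite (supp f)" "\<forall>w\<in>supp f. set w \<subseteq> gens E0 E1"
   and g: "finite (supp g)" "\<forall>w\<in>supp g. set w \<subseteq> gens E0 E1"
    using assms unfolding leavitt_path_algebra_def by auto
  have sub: "supp (free_mult f g) \<subseteq> (\<lambda>(u, v). u @ v) ` (supp f \<times> supp g)"
  proof
    fix w assume w: "w \<in> supp (free_mult f g)"
    have "\<exists>i. f (take i w) \<noteq> 0 \<and> g (drop i w) \<noteq> 0"
    proof (rule ccontr)
      assume "\<not> ?thesis"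
      then have "free_mult f g w = 0" unfolding free_mult_def
        by (intro sum.neutral ballI) auto
      then show False using w unfolding supp_def by simp
    qed
    then obtain i where "f (take i w) \<noteq> 0" "g (drop i w) \<noteq> 0" by blast
    then show "w \<in> (\<lambda>(u, v). u @ v) ` (supp f \<times> supp g)"
      unfolding supp_def by (auto intro!: image_eqI[of _ _ "(take i w, drop i w)"])
  qed
  have "finite (supp (free_mult f g))" using sub f g finite_subset by blast
  moreover have "free_mult f g [] = 0" unfolding free_mult_def by simp
  moreover have "\<forall>w\<in>supp (free_mult f g). set w \<subseteq> gens E0 E1" using sub f g by fastforce
  ultimately show ?thesis unfolding leavitt_path_algebra_def by simp
qed

lemma geom_le: "(\<Sum>i\<le>n. (e::nat) ^ i) \<le> (e + 1) ^ n"
proof (induction n)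
  case 0 then show ?case by simp
next
  case (Suc n)
  have "(\<Sum>i\<le>Suc n. e ^ i) = 1 + (\<Sum>i\<le>n. e * e ^ i)"
    by (subst sum.atMost_Suc_shift) simp
  also have "\<dots> = 1 + e * (\<Sum>i\<le>n. e ^ i)" by (simp add: sum_distrib_left)
  also have "\<dots> \<le> 1 + e * (e + 1) ^ n" using Suc by simp
  also have "\<dots> \<le> (e + 1) ^ n + e * (e + 1) ^ n" by simp
  also have "\<dots> = (e + 1) ^ Suc n" by simp
  finally show ?case .
qed

lemma paths_count:
  assumes "finite E0" "finite E1"
  shows "finite {p. is_path E0 E1 s r p \<and> path_len p \<le> n}
    \<and> card {p. is_path E0 E1 s r p \<and> path_len p \<le> n} \<le> (card E0 + card E1 + 1) ^ Suc n"
proof -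
  let ?L = "{es. set es \<subseteq> E1 \<and> length es \<le> n}"
  have sub: "{p. is_path E0 E1 s r p \<and> path_len p \<le> n} \<subseteq> E0 \<times> ?L"
    unfolding is_path_def path_len_def by auto
  have finL: "finite ?L" using finite_lists_length_le assms by blast
  have fin: "finite (E0 \<times> ?L)" using finL assms by simp
  have "card {p. is_path E0 E1 s r p \<and> path_len p \<le> n} \<le> card (E0 \<times> ?L)"
    by (rule card_mono[OF fin sub])
  also have "\<dots> = card E0 * (\<Sum>i\<le>n. card E1 ^ i)" using card_lists_length_le[OF assms(2)]
    by (simp add: card_cartesian_product)
  also have "\<dots> \<le> card E0 * (card E1 + 1) ^ n" using geom_le by simp
  also have "\<dots> \<le> (card E0 + card E1 + 1) * (card E0 + card E1 + 1) ^ n"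
    by (intro mult_mono power_mono) auto
  finally show ?thesis using finite_subset[OF sub fin] by simp
qed



theorem theorem5p16:
  fixes E0 :: "'v set" and E1 :: "'e set" and s r :: "'e \<Rightarrow> 'v"
  assumes "finite E0" and "finite E1" and "s ` E1 \<subseteq> E0" and "r ` E1 \<subseteq> E0"
    and "A = (path_algebra E0 E1 s r :: ('v \<times> 'e list \<Rightarrow> 'k::field) falg)"
    and "L = (leavitt_path_algebra E0 E1 s r :: (('v, 'e) gen list \<Rightarrow> 'k) falg)"
  shows "exactly_one3 (class0 A) (class1 A) (class2 A) \<and> halg A < \<infinity>
       \<and> exactly_one3 (class0 L) (class1 L) (class2 L) \<and> halg L < \<infinity>"
proof -
  interpret V1: vector_space "scalef :: 'k \<Rightarrow> ('v \<times> 'e list \<Rightarrow> 'k) \<Rightarrow> _" by (rule vector_space_scalef)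
  interpret V2: vector_space "scalef :: 'k \<Rightarrow> (('v, 'e) gen list \<Rightarrow> 'k) \<Rightarrow> _" by (rule vector_space_scalef)
  define P where "P n = {p. is_path E0 E1 s r p \<and> path_len p \<le> n}" for n
  define C where "C = card E0 + card E1 + 1"
  have PC: "finite (P n)" "card (P n) \<le> C ^ Suc n" for n
    using paths_count[OF assms(1,2), of s r n] unfolding P_def C_def by auto
  have C1: "C \<ge> 1" unfolding C_def by simp
  have hA: "halg A < \<infinity>"
  proof (rule halg_bound[of A C])
    fix n
    have eq: "filt A n = bvec ` P n" unfolding assms(5) path_algebra_def P_def by auto
    show "finite (filt A n)" unfolding eq using PC by simp
    show "card (filt A n) \<le> C ^ Suc n" unfolding eq by (rule order.trans[OF card_image_le[OF PC(1)] PC(2)])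
  qed (rule C1)
  have hL: "halg L < \<infinity>"
  proof (rule halg_bound[of L "C * C"])
    fix n
    have eq: "filt L n \<subseteq> (\<lambda>(lam, mu). free_mult (lpa_path lam) (lpa_ghost mu)) ` (P n \<times> P n)"
      unfolding assms(6) leavitt_path_algebra_def P_def by auto
    have fin: "finite (P n \<times> P n)" using PC by simp
    show "finite (filt L n)" using eq fin finite_subset by blast
    have "card (filt L n) \<le> card (P n \<times> P n)"
      by (rule order.trans[OF card_mono[OF finite_imageI[OF fin] eq] card_image_le[OF fin]])
    also have "\<dots> = card (P n) * card (P n)" by (simp add: card_cartesian_product)
    also have "\<dots> \<le> C ^ Suc n * C ^ Suc n" using PC(2)[of n] by (intro mult_mono) auto
    also have "\<dots> = (C * C) ^ Suc n" by (simp add: power_mult_distrib)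
    finally show "card (filt L n) \<le> (C * C) ^ Suc n" .
  qed (use C1 in simp)
  have clA: "\<And>x y. x \<in> carrier A \<Longrightarrow> y \<in> carrier A \<Longrightarrow> mult A x y \<in> carrier A"
    unfolding assms(5) by (rule pa_closed)
  have subA: "module.subspace scalef (ideal A)" unfolding assms(5) path_algebra_def by simp
  have gA: "fin_dim A \<Longrightarrow> GKdim A < \<infinity>" using gk_fin[OF _ clA subA] by blast
  have clL: "\<And>x y. x \<in> carrier L \<Longrightarrow> y \<in> carrier L \<Longrightarrow> mult L x y \<in> carrier L"
    unfolding assms(6) by (rule lpa_closed)
  have subL: "module.subspace scalef (ideal L)" unfolding assms(6) leavitt_path_algebra_def free_ideal_def by simp
  have gL: "fin_dim L \<Longrightarrow> GKdim L < \<infinity>" using gk_fin[OF _ clL subL] by blast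
  show ?thesis using hA hL gA gL
    unfolding exactly_one3_def class0_def class1_def class2_def by auto
qed


end
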